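(* Let $n\ge 2$ and $y=(y_1,\dots,y_{n-1},q)\in\mathbb C^n$. The following are equivalent (in each condition, "for all $j$" means for all $j=1,\dots,[n/2]$): (1) $y\in\widetilde{\mathbb G}_n$; (2) $\binom{n}{j}-y_jz-y_{n-j}w+\binom{n}{j}qzw\neq 0$ for all $z,w\in\overline{\mathbb D}$ and all $j$; (3) for all $j$: $\|\Phi_j(\cdot,y)\|_{H^\infty}<1$, and if $y_jy_{n-j}=\binom{n}{j}^2q$ then in addition $|y_{n-j}|<\binom{n}{j}$; (3') for all $j$: $\|\Phi_{n-j}(\cdot,y)\|_{H^\infty}<1$, and if $y_jy_{n-j}=\binom{n}{j}^2q$ then in addition $|y_j|<\binom{n}{j}$; (4) for all $j$: $\binom{n}{j}|y_j-\bar y_{n-j}q|+|y_jy_{n-j}-\binom{n}{j}^2q|<\binom{n}{j}^2-|y_{n-j}|^2$; (4') for all $j$: $\binom{n}{j}|y_{n-j}-\bar y_{j}q|+|y_jy_{n-j}-\binom{n}{j}^2q|<\binom{n}{j}^2-|y_{j}|^2$; (5) for all $j$: $|y_j|^2-|y_{n-j}|^2+\binom{n}{j}^2|q|^2+2\binom{n}{j}|y_{n-j}-\bar y_jq|<\binom{n}{j}^2$ and $|y_{n-j}|<\binom{n}{j}$; (5') for all $j$: $|y_{n-j}|^2-|y_{j}|^2+\binom{n}{j}^2|q|^2+2\binom{n}{j}|y_{j}-\bar y_{n-j}q|<\binom{n}{j}^2$ and $|y_{j}|<\binom{n}{j}$; (6) $|q|<1$ and $|y_j|^2+|y_{n-j}|^2-\binom{n}{j}^2|q|^2+2|y_jy_{n-j}-\binom{n}{j}^2q|<\binom{n}{j}^2$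 for all $j$; (7) $|y_{n-j}-\bar y_jq|+|y_j-\bar y_{n-j}q|<\binom{n}{j}(1-|q|^2)$ for all $j$; (8) there exist $2\times 2$ complex matrices $B_1,\dots,B_{[n/2]}$ with $\|B_j\|<1$, $y_j=\binom{n}{j}[B_j]_{11}$, $y_{n-j}=\binom{n}{j}[B_j]_{22}$ for all $j$, and $\det B_1=\dots=\det B_{[n/2]}=q$; (9) the same as (8) with the $B_j$ additionally symmetric matrices.
   Context: $\mathbb D$ is the open unit disc, $[x]$ the integer part, $\|\cdot\|$ the operator norm. $\widetilde{\mathbb G}_n=\{(y_1,\dots,y_{n-1},q)\in\mathbb C^n: q\in\mathbb D,\ y_j=\beta_j+\bar\beta_{n-j}q$ for some $\beta_j\in\mathbb C$ with $|\beta_j|+|\beta_{n-j}|<\binom{n}{j}$, $j=1,\dots,n-1\}$. For $z\in\mathbb C$, $y=(y_1,\dots,y_{n-1},q)\in\mathbb C^n$ and $j\in\{1,\dots,n-1\}$, define $\Phi_j(z,y)=\dfrac{\binom{n}{j}qz-y_j}{y_{n-j}z-\binom{n}{j}}$ if $y_{n-j}z\ne\binom{n}{j}$ and $y_jy_{n-j}\neq\binom{n}{j}^2q$, and $\Phi_j(z,y)=y_j/\binom{n}{j}$ if $y_jy_{n-j}=\binom{n}{j}^2q$. Set $\|\Phi_j(\cdot,y)\|_{H^\infty}=\sup_{z\in\mathbb D}|\Phi_j(z,y)|$, understood as $+\infty$ if $\Phi_j(\cdot,y)$ is undefined somewhere on $\mathbb D$ or unbounded there. *)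

theory Defs
  imports "HOL-Analysis.Analysis"
begin

text \<open>A point of C^n is represented by a family y :: nat => complex (only the
  entries y 1, ..., y (n-1) matter) together with the last coordinate q.\<close>

definition cb :: "nat \<Rightarrow> nat \<Rightarrow> real" where
  "cb n j = real (n choose j)"

definition tetrablock_n :: "nat \<Rightarrow> (nat \<Rightarrow> complex) \<Rightarrow> complex \<Rightarrow> bool" where
  "tetrablock_n n y q \<longleftrightarrow> cmod q < 1 \<and>
     (\<exists>\<beta>::nat \<Rightarrow> complex. \<forall>j\<in>{1..n-1}.
        y j = \<beta> j + cnj (\<beta> (n - j)) * q \<and>
        cmod (\<beta> j) + cmod (\<beta> (n - j)) < cb n j)"

definition Phi_defined :: "nat \<Rightarrow> (nat \<Rightarrow> complex) \<Rightarrow> complex \<Rightarrow> nat \<Rightarrow> complex \<Rightarrow> bool" where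
  "Phi_defined n y q j z \<longleftrightarrow>
     y j * y (n - j) = of_real (cb n j ^ 2) * q \<or> y (n - j) * z \<noteq> of_real (cb n j)"

definition Phi :: "nat \<Rightarrow> (nat \<Rightarrow> complex) \<Rightarrow> complex \<Rightarrow> nat \<Rightarrow> complex \<Rightarrow> complex" where
  "Phi n y q j z =
     (if y j * y (n - j) = of_real (cb n j ^ 2) * q then y j / of_real (cb n j)
      else (of_real (cb n j) * q * z - y j) / (y (n - j) * z - of_real (cb n j)))"

definition Phi_Hinf :: "nat \<Rightarrow> (nat \<Rightarrow> complex) \<Rightarrow> complex \<Rightarrow> nat \<Rightarrow> ereal" where
  "Phi_Hinf n y q j =
     (if \<forall>z\<in>ball 0 1. Phi_defined n y q j z
      then (SUP z\<in>ball 0 1. ereal (cmod (Phi n y q j z)))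
      else \<infinity>)"

end

theory Submission
  imports Defs
begin


lemma cm2: "cmod z ^ 2 = Re z ^ 2 + Im z ^ 2" by (simp add: cmod_power2)

lemma I1: "cmod (b - cnj a * p) ^ 2 - cmod (a*b - p) ^ 2 = (1 - cmod a ^ 2) * (cmod b ^ 2 - cmod p ^ 2)"
  by (simp only: cm2) (simp add: algebra_simps power2_eq_square)

lemma I2: "cmod (a - cnj b * p) ^ 2 - cmod (a*b - p) ^ 2 = (1 - cmod b ^ 2) * (cmod a ^ 2 - cmod p ^ 2)"
  by (simp only: cm2) (simp add: algebra_simps power2_eq_square)

lemma I3: "cmod (a - cnj b * p) ^ 2 - cmod (b - cnj a * p) ^ 2 = (1 - cmod p ^ 2) * (cmod a ^ 2 - cmod b ^ 2)"
  by (simp only: cm2) (simp add: algebra_simps power2_eq_square)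

lemma Icirc: "cmod (p*w - a) ^ 2 - cmod (b*w - 1) ^ 2 = (cmod p ^ 2 - cmod b ^ 2) * cmod w ^ 2 + 2 * Re (w * (b - cnj a * p)) + cmod a ^ 2 - 1"
  by (simp only: cm2) (simp add: algebra_simps power2_eq_square)

lemma IJ: "(a - p*w) * (1 - of_real (cmod b ^ 2)) = (a - cnj b * p) * (1 - b*w) + (a*b - p) * (w - cnj b)"
proof -
  have "of_real (cmod b ^ 2) = b * cnj b" by (simp add: complex_norm_square mult.commute del: of_real_power)
  then show ?thesis by (simp add: algebra_simps)
qed

lemma Iblaschke: "cmod (1 - b*w) ^ 2 - cmod (w - cnj b) ^ 2 = (1 - cmod w ^ 2) * (1 - cmod b ^ 2)"
  by (simp only: cm2) (simp add: algebra_simps power2_eq_square)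

lemma Ib: "(1 - of_real (cmod p ^ 2)) * b = (b - cnj a * p) + cnj (a - cnj b * p) * p"
proof -
  have "of_real (cmod p ^ 2) = p * cnj p" by (simp add: complex_norm_square del: of_real_power)
  then show ?thesis by (simp add: algebra_simps)
qed

lemma Ip: "(a*b - p) - b * (a - cnj b * p) = - p * (1 - of_real (cmod b ^ 2))"
proof -
  have "of_real (cmod b ^ 2) = b * cnj b" by (simp add: complex_norm_square mult.commute del: of_real_power)
  then show ?thesis by (simp add: algebra_simps)
qed

lemma realT6: fixes al be pi de :: real
  assumes "al \<ge> 0" "be \<ge> 0" "pi \<ge> 0" "de \<ge> al*be - pi" "de \<ge> pi - al*be" "pi < 1"
    "al^2 + be^2 - pi^2 + 2*de < 1"
  shows "be^2 + de < 1"
proof -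
  have 1: "(al - be)^2 < (1 - pi)^2" using assms(5,7) by (simp add: power2_eq_square algebra_simps)
  have 2: "(al + be)^2 < (1 + pi)^2" using assms(4,7) by (simp add: power2_eq_square algebra_simps)
  have 3: "\<bar>be - al\<bar> < 1 - pi" using 1 assms(6)
    by (metis abs_minus_commute abs_of_pos diff_gt_0_iff_gt power2_abs power_less_imp_less_base abs_ge_zero)
  have 4: "be + al < 1 + pi" using 2 assms(1,2,3) 
    by (metis add.commute add_nonneg_nonneg power_less_imp_less_base zero_le_one add_nonneg_nonneg)
  have 5: "be^2 - al^2 < 1 - pi^2"
  proof (cases "be \<ge> al")
    case True
    have "be^2 - al^2 = (be - al) * (be + al)" by (simp add: power2_eq_square algebra_simps)
    also have "\<dots> \<le> (1 - pi) * (be + al)" using 3 True assms by (intro mult_right_mono) auto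
    also have "\<dots> < (1 - pi) * (1 + pi)" using 4 assms by (intro mult_strict_left_mono) auto
    also have "\<dots> = 1 - pi^2" by (simp add: power2_eq_square algebra_simps)
    finally show ?thesis .
  next
    case False
    then have "be^2 \<le> al^2" using assms by (simp add: power_mono)
    moreover have "pi^2 < 1" using assms by (simp add: power_less_one_iff abs_less_iff)
    ultimately show ?thesis by simp
  qed
  show ?thesis using 5 assms(7) by simp
qed


definition "Mc a b p \<longleftrightarrow> cmod b < 1 \<and> (\<forall>w. cmod w \<le> 1 \<longrightarrow> cmod (p*w - a) < cmod (b*w - 1))"
definition "T2 a b p \<longleftrightarrow> (\<forall>z w. cmod z \<le> 1 \<longrightarrow> cmod w \<le> 1 \<longrightarrow> 1 - a*z - b*w + p*z*w \<noteq> 0)"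
definition "T4 a b p \<longleftrightarrow> cmod (a - cnj b * p) + cmod (a*b - p) < 1 - cmod b ^ 2"
definition "T5 a b p \<longleftrightarrow> cmod a ^ 2 - cmod b ^ 2 + cmod p ^ 2 + 2 * cmod (b - cnj a * p) < 1 \<and> cmod b < 1"
definition "T6 a b p \<longleftrightarrow> cmod p < 1 \<and> cmod a ^ 2 + cmod b ^ 2 - cmod p ^ 2 + 2 * cmod (a*b - p) < 1"
definition "T7 a b p \<longleftrightarrow> cmod (b - cnj a * p) + cmod (a - cnj b * p) < 1 - cmod p ^ 2"

lemma T2_Mc: "T2 a b p \<longleftrightarrow> Mc a b p"
proof
  assume H: "T2 a b p"
  have b1: "cmod b < 1"
  proof (rule ccontr)
    assume "\<not> cmod b < 1"
    then have "b \<noteq> 0" "cmod (1/b) \<le> 1" by (auto simp: norm_divide divide_le_eq_1)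
    then show False using H[unfolded T2_def, rule_format, of 0 "1/b"] by simp
  qed
  have "cmod (p*w - a) < cmod (b*w - 1)" if w: "cmod w \<le> 1" for w
  proof (rule ccontr)
    assume C: "\<not> ?thesis"
    have "cmod b * cmod w \<le> cmod b" using w by (simp add: mult_left_le)
    then have "cmod (b*w) < 1" using b1 by (simp add: norm_mult)
    then have ne: "b*w - 1 \<noteq> 0" by auto
    then have ne2: "p*w - a \<noteq> 0" using C by auto
    define z where "z = (b*w - 1) / (p*w - a)"
    have "cmod z \<le> 1" using C ne2 by (simp add: z_def norm_divide divide_le_eq_1)
    moreover have "1 - a*z - b*w + p*z*w = 0" using ne2 by (simp add: z_def field_simps)
    ultimately show False using H w unfolding T2_def by blast
  qed
  then show "Mc a b p" using b1 unfolding Mc_def by blast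
next
  assume H: "Mc a b p"
  show "T2 a b p" unfolding T2_def
  proof (intro allI impI)
    fix z w :: complex assume z: "cmod z \<le> 1" and w: "cmod w \<le> 1"
    have lt: "cmod (p*w - a) < cmod (b*w - 1)" using H w unfolding Mc_def by blast
    have "cmod (z * (p*w - a)) \<le> cmod (p*w - a)" using z by (simp add: norm_mult mult_left_le_one_le)
    moreover have "b*w - 1 - z*(p*w - a) = -(1 - a*z - b*w + p*z*w)" by (simp add: algebra_simps)
    ultimately show "1 - a*z - b*w + p*z*w \<noteq> 0" using lt by force
  qed
qed


lemma align: "\<exists>w. cmod w = 1 \<and> w * v = of_real (cmod v)"
proof (cases "v = 0")
  case True then show ?thesis by (intro exI[of _ 1]) simp
next
  case False
  show ?thesis
  proof (intro exI[of _ "cnj v / of_real (cmod v)"] conjI)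
    show "cmod (cnj v / of_real (cmod v)) = 1" using False by (simp add: norm_divide)
    have "cnj v * v = of_real (cmod v ^ 2)"
      by (simp only: complex_norm_square) (simp add: mult.commute)
    then show "cnj v / of_real (cmod v) * v = of_real (cmod v)" using False by (simp add: field_simps power2_eq_square)
  qed
qed

lemma sq_less_norm: "cmod x < cmod y \<Longrightarrow> cmod x ^ 2 < cmod y ^ 2"
  by (simp add: power_strict_mono)

lemma Mc_T5: assumes "Mc a b p" shows "T5 a b p"
proof -
  obtain w where w: "cmod w = 1" "w * (b - cnj a * p) = of_real (cmod (b - cnj a * p))"
    using align by blast
  have "cmod (p*w - a) < cmod (b*w - 1)" using assms w unfolding Mc_def by simp
  then have "cmod (p*w - a) ^ 2 - cmod (b*w - 1) ^ 2 < 0" using sq_less_norm by simp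
  then show ?thesis using assms w unfolding Icirc T5_def Mc_def by simp
qed

lemma circle_T5: assumes "T5 a b p" "cmod w = 1" shows "cmod (p*w - a) < cmod (b*w - 1)"
proof -
  have "Re (w * (b - cnj a * p)) \<le> cmod (b - cnj a * p)"
    using complex_Re_le_cmod[of "w * (b - cnj a * p)"] assms(2) by (simp add: norm_mult)
  moreover have "(cmod p ^ 2 - cmod b ^ 2) * cmod w ^ 2 = cmod p ^ 2 - cmod b ^ 2" using assms(2) by simp
  ultimately have "cmod (p*w - a) ^ 2 - cmod (b*w - 1) ^ 2 < 0" using assms(1) unfolding Icirc T5_def by linarith
  then have "cmod (p*w - a) ^ 2 < cmod (b*w - 1) ^ 2" by linarith
  then show ?thesis by (rule power_less_imp_less_base) simp
qed

lemma zeta_ex: "\<exists>\<zeta>. cmod \<zeta> = 1 \<and> cmod (u + D * \<zeta>) = cmod u + cmod D"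
proof (cases "u = 0 \<or> D = 0")
  case True then show ?thesis by (intro exI[of _ 1]) auto
next
  case False
  define \<zeta> where "\<zeta> = (u / of_real (cmod u)) * (of_real (cmod D) / D)"
  have "u + D * \<zeta> = u * of_real (1 + cmod D / cmod u)" using False
    by (simp add: \<zeta>_def field_simps)
  then have "cmod (u + D * \<zeta>) = cmod u * \<bar>1 + cmod D / cmod u\<bar>" by (simp only: norm_mult norm_of_real)
  moreover have "cmod u * \<bar>1 + cmod D / cmod u\<bar> = cmod u + cmod D" using False by (simp add: distrib_left)
  ultimately show ?thesis using False by (intro exI[of _ \<zeta>]) (simp add: \<zeta>_def norm_mult norm_divide)
qed

lemma T5_T4: assumes "T5 a b p" shows "T4 a b p"
proof -
  have b1: "cmod b < 1" using assms unfolding T5_def by simp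
  obtain \<zeta> where z: "cmod \<zeta> = 1" "cmod ((a - cnj b * p) + (a*b - p) * \<zeta>) = cmod (a - cnj b * p) + cmod (a*b - p)"
    using zeta_ex by blast
  have nz: "1 + \<zeta> * b \<noteq> 0"
  proof
    assume "1 + \<zeta> * b = 0" then have "\<zeta> * b = -1" by (simp add: add_eq_0_iff)
    then have "cmod b = 1" using z by (metis norm_minus_cancel norm_mult norm_one mult_1)
    then show False using b1 by simp
  qed
  define w where "w = (\<zeta> + cnj b) / (1 + \<zeta> * b)"
  have zc: "\<zeta> * cnj \<zeta> = 1" using z by (metis complex_norm_square of_real_1 one_power2)
  have "\<zeta> + cnj b = \<zeta> * cnj (1 + \<zeta> * b)" using zc by (simp add: algebra_simps)
  also have "cnj (1 + \<zeta> * b) = 1 + cnj \<zeta> * cnj b" by simp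
  finally have "cmod (\<zeta> + cnj b) = cmod (1 + cnj \<zeta> * cnj b)" using z by (simp add: norm_mult)
  also have "1 + cnj \<zeta> * cnj b = cnj (1 + \<zeta> * b)" by simp
  finally have "cmod (\<zeta> + cnj b) = cmod (1 + \<zeta> * b)" by (simp only: complex_mod_cnj)
  then have w1: "cmod w = 1" using nz by (simp add: w_def norm_divide)
  have bb: "b * cnj b = of_real (cmod b ^ 2)" by (simp add: complex_norm_square mult.commute del: of_real_power)
  have weq: "w - cnj b = \<zeta> * (1 - b * w)" using nz
    by (simp add: w_def field_simps)
  define S where "S = cmod (a - cnj b * p) + cmod (a*b - p)"
  define K where "K = 1 - cmod b ^ 2"
  have Kpos: "K > 0" using b1 by (simp add: K_def abs_square_less_1)
  have "(a - p*w) * (1 - of_real (cmod b ^ 2)) = ((a - cnj b * p) + (a*b - p) * \<zeta>) * (1 - b*w)"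
    unfolding IJ weq by (simp add: algebra_simps)
  then have "(a - p*w) * of_real K = ((a - cnj b * p) + (a*b - p) * \<zeta>) * (1 - b*w)"
    by (simp add: K_def)
  then have "cmod (a - p*w) * \<bar>K\<bar> = cmod ((a - cnj b * p) + (a*b - p) * \<zeta>) * cmod (1 - b*w)"
    by (metis norm_mult norm_of_real)
  then have XK: "cmod (a - p*w) * K = S * cmod (1 - b*w)" using Kpos z(2) by (simp add: S_def)
  have XY: "cmod (a - p*w) < cmod (1 - b*w)" using circle_T5[OF assms w1] by (simp add: norm_minus_commute)
  have "cmod (a - p*w) * K < cmod (1 - b*w) * K" using XY Kpos by (rule mult_strict_right_mono)
  then have "S * cmod (1 - b*w) < K * cmod (1 - b*w)" using XK by (simp add: mult.commute)
  then have "S < K" by (simp add: mult_less_cancel_right)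
  then show ?thesis unfolding T4_def S_def K_def .
qed


lemma T4_b: "T4 a b p \<Longrightarrow> cmod b < 1"
proof -
  assume "T4 a b p"
  then have "cmod b ^ 2 < 1" unfolding T4_def by (smt (verit) norm_ge_zero)
  then show ?thesis by (simp add: abs_square_less_1)
qed

lemma T4_bound:
  assumes "T4 a b p" "cmod w \<le> 1"
  shows "cmod (p*w - a) * (1 - cmod b ^ 2) \<le> (cmod (a - cnj b * p) + cmod (a*b - p)) * cmod (b*w - 1)"
proof -
  have b1: "cmod b < 1" using T4_b[OF assms(1)] .
  define K where "K = 1 - cmod b ^ 2"
  have Kpos: "K > 0" using b1 by (simp add: K_def abs_square_less_1)
  have "cmod (1 - b*w) ^ 2 - cmod (w - cnj b) ^ 2 \<ge> 0"
    unfolding Iblaschke using assms(2) b1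
    by (intro mult_nonneg_nonneg) (simp_all add: abs_square_le_1 abs_square_less_1 less_imp_le)
  then have "cmod (w - cnj b) ^ 2 \<le> cmod (1 - b*w) ^ 2" by simp
  then have bl: "cmod (w - cnj b) \<le> cmod (1 - b*w)"
    by (rule power2_le_imp_le) simp
  have "(a - p*w) * of_real K = (a - cnj b * p) * (1 - b*w) + (a*b - p) * (w - cnj b)"
    using IJ[of a p w b] by (simp add: K_def)
  then have "cmod (a - p*w) * K = cmod ((a - cnj b * p) * (1 - b*w) + (a*b - p) * (w - cnj b))"
    using Kpos by (metis abs_of_pos norm_mult norm_of_real)
  also have "\<dots> \<le> cmod (a - cnj b * p) * cmod (1 - b*w) + cmod (a*b - p) * cmod (w - cnj b)"
    by (metis norm_mult norm_triangle_ineq)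
  also have "\<dots> \<le> cmod (a - cnj b * p) * cmod (1 - b*w) + cmod (a*b - p) * cmod (1 - b*w)"
    using bl by (simp add: mult_left_mono)
  finally show ?thesis by (simp add: K_def norm_minus_commute algebra_simps)
qed

lemma T4_Mc: assumes "T4 a b p" shows "Mc a b p"
proof -
  have b1: "cmod b < 1" using T4_b[OF assms] .
  have "cmod (p*w - a) < cmod (b*w - 1)" if w: "cmod w \<le> 1" for w
  proof -
    have "cmod (b*w) < 1" using b1 w by (simp add: norm_mult) (meson le_less_trans mult_left_le norm_ge_zero)
    then have Y: "cmod (b*w - 1) > 0" by auto
    have K: "1 - cmod b ^ 2 > 0" using b1 by (simp add: abs_square_less_1)
    have "cmod (p*w - a) * (1 - cmod b ^ 2) \<le> (cmod (a - cnj b * p) + cmod (a*b - p)) * cmod (b*w - 1)"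
      using T4_bound[OF assms w] .
    also have "\<dots> < (1 - cmod b ^ 2) * cmod (b*w - 1)"
      using assms Y unfolding T4_def by (simp add: mult_strict_right_mono)
    finally have "cmod (p*w - a) * (1 - cmod b ^ 2) < cmod (b*w - 1) * (1 - cmod b ^ 2)" by (simp add: mult.commute)
    then show ?thesis using K by (simp add: mult_less_cancel_right)
  qed
  then show ?thesis using b1 unfolding Mc_def by blast
qed

lemma T4_T6: assumes "T4 a b p" shows "T6 a b p"
proof -
  have b1: "cmod b < 1" using T4_b[OF assms] .
  define K where "K = 1 - cmod b ^ 2"
  have Kpos: "K > 0" using b1 by (simp add: K_def abs_square_less_1)
  define u where "u = a - cnj b * p"
  define D where "D = a*b - p"
  have h: "cmod u < K - cmod D" using assms unfolding T4_def u_def D_def K_def by simp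
  then have "cmod u ^ 2 < (K - cmod D) ^ 2" by (intro power_strict_mono) auto
  then have "cmod D ^ 2 + K * (cmod a ^ 2 - cmod p ^ 2) < (K - cmod D) ^ 2"
    using I2[of a b p] unfolding u_def D_def K_def by simp
  then have "K * (cmod a ^ 2 - cmod p ^ 2) < K * (K - 2 * cmod D)"
    by (simp add: power2_eq_square algebra_simps)
  then have i: "cmod a ^ 2 - cmod p ^ 2 < K - 2 * cmod D" using Kpos by simp
  have "cmod p * K = cmod (D - b * u)"
    using Ip[of a b p] Kpos unfolding u_def D_def K_def
    by (simp add: norm_mult norm_minus_cancel) (metis abs_of_pos norm_of_real of_real_1 of_real_diff of_real_power K_def Kpos)
  also have "\<dots> \<le> cmod D + cmod b * cmod u" by (metis norm_mult norm_triangle_ineq4)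
  also have "\<dots> \<le> cmod D + cmod u" using b1 by (simp add: mult_left_le_one_le less_imp_le)
  also have "\<dots> < K" using h by simp
  finally have "cmod p < 1" using Kpos by (simp add: mult_less_cancel_right2 mult.commute)
  then show ?thesis using i unfolding T6_def K_def D_def by simp
qed


lemma T6_T4: assumes "T6 a b p" shows "T4 a b p"
proof -
  have p1: "cmod p < 1" and ineq: "cmod a ^ 2 + cmod b ^ 2 - cmod p ^ 2 + 2 * cmod (a*b - p) < 1"
    using assms unfolding T6_def by auto
  have "\<bar>cmod (a*b) - cmod p\<bar> \<le> cmod (a*b - p)" by (rule norm_triangle_ineq3)
  then have d1: "cmod (a*b - p) \<ge> cmod a * cmod b - cmod p" and d2: "cmod (a*b - p) \<ge> cmod p - cmod a * cmod b"
    by (auto simp: norm_mult)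
  have bd: "cmod b ^ 2 + cmod (a*b - p) < 1"
    by (rule realT6[OF norm_ge_zero norm_ge_zero norm_ge_zero d1 d2 p1 ineq])
  define K where "K = 1 - cmod b ^ 2"
  define u where "u = a - cnj b * p"
  define D where "D = a*b - p"
  have KD: "K - cmod D > 0" using bd by (simp add: K_def D_def)
  have Kpos: "K > 0" using KD by (smt (verit) norm_ge_zero)
  have "K * (cmod a ^ 2 - cmod p ^ 2) < K * (K - 2 * cmod D)"
    using ineq Kpos by (intro mult_strict_left_mono) (simp_all add: K_def D_def)
  then have "cmod D ^ 2 + K * (cmod a ^ 2 - cmod p ^ 2) < (K - cmod D) ^ 2"
    by (simp add: power2_eq_square algebra_simps)
  then have "cmod u ^ 2 < (K - cmod D) ^ 2" using I2[of a b p] unfolding u_def D_def K_def by simp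
  then have "cmod u < K - cmod D" using KD by (simp add: power_less_imp_less_base)
  then show ?thesis unfolding T4_def u_def D_def K_def by simp
qed

lemma T7_T5: assumes "T7 a b p" shows "T5 a b p"
proof -
  define k where "k = 1 - cmod p ^ 2"
  define s where "s = cmod (a - cnj b * p)"
  define t where "t = cmod (b - cnj a * p)"
  have st: "t + s < k" using assms unfolding T7_def k_def s_def t_def by simp
  have s0: "s \<ge> 0" "t \<ge> 0" by (simp_all add: s_def t_def)
  have kpos: "k > 0" using st s0 by simp
  have p1: "cmod p < 1" using kpos by (simp add: k_def abs_square_less_1)
  have "cmod b * k = cmod ((b - cnj a * p) + cnj (a - cnj b * p) * p)"
    using Ib[of p b a] kpos unfolding k_def by (metis abs_of_pos mult.commute norm_mult norm_of_real of_real_1 of_real_diff of_real_power)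
  also have "\<dots> \<le> t + s * cmod p" unfolding s_def t_def by (metis complex_mod_cnj norm_mult norm_triangle_ineq)
  also have "\<dots> \<le> t + s" using p1 s0 by (simp add: mult_left_le less_imp_le)
  also have "\<dots> < k" using st .
  finally have b1: "cmod b < 1" using kpos by (simp add: mult_less_cancel_right2[symmetric] mult.commute)
  have "s < k - t" using st by simp
  then have "s ^ 2 < (k - t) ^ 2" using s0 by (intro power_strict_mono) auto
  then have "k * (cmod a ^ 2 - cmod b ^ 2) < k * (k - 2 * t)"
    using I3[of a b p] unfolding s_def t_def k_def by (simp add: power2_eq_square algebra_simps)
  then have "cmod a ^ 2 - cmod b ^ 2 < k - 2 * t" using kpos by simp
  then show ?thesis unfolding T5_def using b1 by (simp add: k_def t_def)
qed

lemma T5T5_T7: assumes "T5 a b p" "T5 b a p" shows "T7 a b p"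
  using assms unfolding T5_def T7_def by simp

lemma T6_sym: "T6 a b p \<longleftrightarrow> T6 b a p"
  unfolding T6_def by (simp add: mult.commute add.commute)

lemma core_equiv:
  shows "T7 a b p \<longleftrightarrow> T4 a b p" "T7 a b p \<longleftrightarrow> T5 a b p" "T7 a b p \<longleftrightarrow> T6 a b p"
    "T7 a b p \<longleftrightarrow> Mc a b p" "T7 a b p \<longleftrightarrow> T2 a b p"
proof -
  have 1: "T6 a b p \<Longrightarrow> T7 a b p"
    by (metis T4_Mc Mc_T5 T6_T4 T6_sym T5T5_T7)
  have 2: "T7 a b p \<Longrightarrow> T6 a b p" by (metis T7_T5 T5_T4 T4_T6)
  show "T7 a b p \<longleftrightarrow> T4 a b p" "T7 a b p \<longleftrightarrow> T5 a b p" "T7 a b p \<longleftrightarrow> T6 a b p"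
    "T7 a b p \<longleftrightarrow> Mc a b p" "T7 a b p \<longleftrightarrow> T2 a b p"
    using 1 2 T4_Mc Mc_T5 T5_T4 T4_T6 T6_T4 T2_Mc by metis+
qed




definition mat2 :: "complex \<Rightarrow> complex \<Rightarrow> complex \<Rightarrow> complex \<Rightarrow> complex^2^2" where
  "mat2 a11 a12 a21 a22 = (\<chi> i j. if i = 1 then (if j = 1 then a11 else a12) else (if j = 1 then a21 else a22))"

definition vec2 :: "complex \<Rightarrow> complex \<Rightarrow> complex^2" where
  "vec2 x1 x2 = (\<chi> i. if i = 1 then x1 else x2)"

lemma two_ne_one: "(2::2) \<noteq> 1" by simp

lemma mat2_nth[simp]: "mat2 a11 a12 a21 a22 $ 1 $ 1 = a11" "mat2 a11 a12 a21 a22 $ 1 $ 2 = a12"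
  "mat2 a11 a12 a21 a22 $ 2 $ 1 = a21" "mat2 a11 a12 a21 a22 $ 2 $ 2 = a22"
  by (simp_all add: mat2_def)

lemma vec2_nth[simp]: "vec2 x1 x2 $ 1 = x1" "vec2 x1 x2 $ 2 = x2"
  by (simp_all add: vec2_def)

lemma mat_eta: "(M::complex^2^2) = mat2 (M$1$1) (M$1$2) (M$2$1) (M$2$2)"
  unfolding vec_eq_iff forall_2 by simp

lemma vec_eta: "(x::complex^2) = vec2 (x$1) (x$2)"
  unfolding vec_eq_iff forall_2 by simp

lemma mat2_mult: "mat2 a11 a12 a21 a22 *v vec2 x1 x2 = vec2 (a11*x1 + a12*x2) (a21*x1 + a22*x2)"
  unfolding vec_eq_iff forall_2 by (simp add: matrix_vector_mult_def sum_2)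

lemma vec2_eq: "vec2 x1 x2 = vec2 y1 y2 \<longleftrightarrow> x1 = y1 \<and> x2 = y2"
  unfolding vec_eq_iff forall_2 by simp

lemma vec2_zero: "vec2 x1 x2 = 0 \<longleftrightarrow> x1 = 0 \<and> x2 = 0"
  unfolding vec_eq_iff forall_2 by simp

lemma norm_vec2: "norm (vec2 x1 x2) ^ 2 = cmod x1 ^ 2 + cmod x2 ^ 2"
  unfolding norm_vec_def L2_set_def by (simp add: sum_2)

lemma det_mat2: "det (mat2 a11 a12 a21 a22) = a11 * a22 - a12 * a21"
  by (simp add: det_2)

lemma transpose_mat2: "transpose (mat2 a11 a12 a21 a22) = mat2 a11 a21 a12 a22"
  unfolding vec_eq_iff forall_2 by (simp add: transpose_def)


definition "T8 a b p \<longleftrightarrow> (\<exists>M::complex^2^2. onorm (\<lambda>v. M *v v) < 1 \<and> M$1$1 = a \<and> M$2$2 = b \<and> det M = p)"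
definition "T9 a b p \<longleftrightarrow> (\<exists>M::complex^2^2. onorm (\<lambda>v. M *v v) < 1 \<and> transpose M = M \<and> M$1$1 = a \<and> M$2$2 = b \<and> det M = p)"

lemma norm_vec2_le: assumes "cmod z \<le> 1" "cmod w \<le> 1"
  shows "norm (vec2 (z*x1) (w*x2)) \<le> norm (vec2 x1 x2)"
proof -
  have s1: "cmod (z*x1) \<le> cmod x1" using assms by (simp add: norm_mult mult_left_le_one_le)
  have s2: "cmod (w*x2) \<le> cmod x2" using assms by (simp add: norm_mult mult_left_le_one_le)
  have "cmod (z*x1) ^ 2 \<le> cmod x1 ^ 2" by (rule power_mono[OF s1]) simp
  moreover have "cmod (w*x2) ^ 2 \<le> cmod x2 ^ 2" by (rule power_mono[OF s2]) simp
  ultimately have "norm (vec2 (z*x1) (w*x2)) ^ 2 \<le> norm (vec2 x1 x2) ^ 2" unfolding norm_vec2 by (rule add_mono)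
  then show ?thesis by (rule power2_le_imp_le) simp
qed

lemma T8_T2: assumes "T8 a b p" shows "T2 a b p"
proof -
  obtain M :: "complex^2^2" where M: "onorm (\<lambda>v. M *v v) < 1" "M$1$1 = a" "M$2$2 = b" "det M = p"
    using assms unfolding T8_def by blast
  define m12 where "m12 = M$1$2"
  define m21 where "m21 = M$2$1"
  have Meq: "M = mat2 a m12 m21 b" using M by (subst mat_eta) (simp add: m12_def m21_def)
  have detp: "a*b - m12*m21 = p" using M(4) unfolding Meq det_mat2 .
  show ?thesis unfolding T2_def
  proof (intro allI impI notI)
    fix z w :: complex assume z: "cmod z \<le> 1" and w: "cmod w \<le> 1" and eq: "1 - a*z - b*w + p*z*w = 0"
    have ex: "\<exists>x1 x2. vec2 x1 x2 \<noteq> 0 \<and> M *v vec2 (z*x1) (w*x2) = vec2 x1 x2"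
    proof (cases "vec2 (m12*w) (1 - a*z) \<noteq> 0")
      case True
      have "M *v vec2 (z*(m12*w)) (w*(1 - a*z)) = vec2 (m12*w) (1 - a*z)"
        unfolding Meq mat2_mult vec2_eq using eq detp[symmetric] by (simp add: algebra_simps)
      then show ?thesis using True by blast
    next
      case F1: False
      show ?thesis
      proof (cases "vec2 (1 - b*w) (m21*z) \<noteq> 0")
        case True
        have "M *v vec2 (z*(1 - b*w)) (w*(m21*z)) = vec2 (1 - b*w) (m21*z)"
          unfolding Meq mat2_mult vec2_eq using eq detp[symmetric] by (simp add: algebra_simps)
        then show ?thesis using True by blast
      next
        case False
        then have h: "m12*w = 0" "a*z = 1" "b*w = 1" "m21*z = 0" using F1 unfolding vec2_zero by auto
        have "M *v vec2 (z*1) (w*0) = vec2 1 0" unfolding Meq mat2_mult vec2_eq using h by (simp add: mult.commute)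
        moreover have "vec2 (1::complex) 0 \<noteq> 0" unfolding vec2_zero by simp
        ultimately show ?thesis by blast
      qed
    qed
    then obtain x1 x2 where x: "vec2 x1 x2 \<noteq> 0" "M *v vec2 (z*x1) (w*x2) = vec2 x1 x2" by blast
    have "norm (vec2 x1 x2) = norm (M *v vec2 (z*x1) (w*x2))" using x by simp
    also have "\<dots> \<le> onorm (\<lambda>v. M *v v) * norm (vec2 (z*x1) (w*x2))"
      by (rule onorm) (rule matrix_vector_mul_bounded_linear)
    also have "\<dots> \<le> onorm (\<lambda>v. M *v v) * norm (vec2 x1 x2)"
      using norm_vec2_le[OF z w] by (intro mult_left_mono) (simp_all add: onorm_pos_le)
    also have "\<dots> < norm (vec2 x1 x2)" using M(1) x(1) by simp
    finally show False by simp
  qed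
qed


lemma E1: "cmod (a*x1 + w*x2) ^ 2 + cmod (w*x1 + b*x2) ^ 2 =
   (cmod a ^ 2 + cmod w ^ 2) * cmod x1 ^ 2 + (cmod b ^ 2 + cmod w ^ 2) * cmod x2 ^ 2
   + 2 * Re ((cnj a * w + cnj w * b) * cnj x1 * x2)"
  by (simp only: cm2) (simp add: algebra_simps power2_eq_square)

lemma E2: "cmod (cnj a * w + cnj w * b) ^ 2 = (cmod a ^ 2 + cmod w ^ 2) * (cmod b ^ 2 + cmod w ^ 2) - cmod (a*b - w*w) ^ 2"
  by (simp only: cm2) (simp add: algebra_simps power2_eq_square)

lemma psd2: fixes al be g s t :: real
  assumes "al \<ge> 0" "be \<ge> 0" "al * be = g ^ 2"
  shows "2 * g * s * t \<le> al * s ^ 2 + be * t ^ 2"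
proof (cases "al = 0")
  case True
  then have "g = 0" using assms by simp
  then show ?thesis using assms by simp
next
  case False
  then have ap: "al > 0" using assms by simp
  have "al * (al * s ^ 2 + be * t ^ 2 - 2 * g * s * t) = (al * s - g * t) ^ 2"
    using assms(3) by (simp add: power2_eq_square algebra_simps)
  then have "al * (al * s ^ 2 + be * t ^ 2 - 2 * g * s * t) \<ge> 0" by simp
  then have "al * s ^ 2 + be * t ^ 2 - 2 * g * s * t \<ge> 0" using ap by (simp add: zero_le_mult_iff)
  then show ?thesis by simp
qed

lemma T6_T9: assumes "T6 a b p" shows "T9 a b p"
proof -
  have p1: "cmod p < 1" and ineq: "cmod a ^ 2 + cmod b ^ 2 - cmod p ^ 2 + 2 * cmod (a*b - p) < 1"
    using assms unfolding T6_def by auto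
  define w where "w = csqrt (a*b - p)"
  have ww: "w * w = a*b - p" unfolding w_def by (metis power2_csqrt power2_eq_square)
  define A where "A = cmod a ^ 2"
  define B where "B = cmod b ^ 2"
  define P where "P = cmod p ^ 2"
  define W where "W = cmod w ^ 2"
  have W: "W = cmod (a*b - p)" unfolding W_def ww[symmetric] by (simp add: norm_mult power2_eq_square)
  define g where "g = cmod (cnj a * w + cnj w * b)"
  have g2: "g ^ 2 = (A + W) * (B + W) - P"
    unfolding g_def E2 ww A_def B_def W_def P_def by (simp add: algebra_simps)
  define F where "F = A + B + 2 * W"
  have FP: "F^2 - 4 * P - (A - B)^2 = 4 * g ^ 2" unfolding g2 F_def by (simp add: power2_eq_square algebra_simps)
  define S where "S = sqrt (F^2 - 4*P)"
  have "0 \<le> 4 * g ^ 2 + (A - B) ^ 2" by simp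
  then have F4P: "0 \<le> F^2 - 4*P" using FP by linarith
  then have S2: "S ^ 2 = F^2 - 4*P" unfolding S_def by (rule real_sqrt_pow2)
  have S0: "S \<ge> 0" unfolding S_def using F4P by (rule real_sqrt_ge_zero)
  have g0: "0 \<le> 4 * g ^ 2" by simp
  have "(A - B) ^ 2 \<le> S ^ 2" using S2 FP g0 by linarith
  then have "\<bar>A - B\<bar> \<le> \<bar>S\<bar>" by (simp only: abs_le_square_iff)
  then have SAB: "-S \<le> A - B" "A - B \<le> S" using S0 by (simp_all add: abs_le_iff)
  define la where "la = (F + S) / 2"
  define al where "al = la - (A + W)"
  define be where "be = la - (B + W)"
  have alE: "al = (S + (B - A)) / 2" unfolding al_def la_def F_def by (simp add: field_simps)
  have beE: "be = (S - (B - A)) / 2" unfolding be_def la_def F_def by (simp add: field_simps)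
  have al0: "al \<ge> 0"
  proof -
    have "0 \<le> S + (B - A)" using SAB(2) by simp
    then show ?thesis unfolding alE by simp
  qed
  have be0: "be \<ge> 0"
  proof -
    have "0 \<le> S - (B - A)" using SAB(1) by simp
    then show ?thesis unfolding beE by simp
  qed
  have albe: "al * be = g ^ 2"
  proof -
    have "al * be = (S + (B - A)) * (S - (B - A)) / 4" unfolding alE beE by simp
    also have "\<dots> = (S ^ 2 - (A - B) ^ 2) / 4" by (simp add: power2_eq_square algebra_simps)
    also have "\<dots> = g ^ 2" using S2 FP by simp
    finally show ?thesis .
  qed
  have P0: "P \<ge> 0" "A \<ge> 0" "B \<ge> 0" "W \<ge> 0" by (simp_all add: P_def A_def B_def W_def)
  have P1: "P < 1" using p1 unfolding P_def by (simp add: abs_square_less_1)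
  have F1: "F < 1 + P" using ineq unfolding F_def A_def B_def P_def W by simp
  have F0: "F \<ge> 0" unfolding F_def using P0 by simp
  have "S < 2 - F"
  proof -
    have "(2 - F) ^ 2 = 4 - 4 * F + F ^ 2" by (simp add: power2_eq_square algebra_simps)
    then have "S ^ 2 < (2 - F) ^ 2" using S2 F1 by linarith
    moreover have "0 \<le> 2 - F" using F1 P1 by linarith
    ultimately show ?thesis by (rule power_less_imp_less_base)
  qed
  then have la1: "la < 1" unfolding la_def by simp
  have la0: "la \<ge> 0" unfolding la_def using F0 S0 by simp
  define M where "M = mat2 a w w b"
  have bound: "norm (M *v x) \<le> sqrt la * norm x" for x
  proof -
    define x1 where "x1 = x $ 1"
    define x2 where "x2 = x $ 2"
    have xe: "x = vec2 x1 x2" unfolding x1_def x2_def by (rule vec_eta)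
    have "norm (M *v x) ^ 2 = cmod (a*x1 + w*x2) ^ 2 + cmod (w*x1 + b*x2) ^ 2"
      unfolding xe M_def mat2_mult norm_vec2 ..
    also have "\<dots> = (A + W) * cmod x1 ^ 2 + (B + W) * cmod x2 ^ 2 + 2 * Re ((cnj a * w + cnj w * b) * cnj x1 * x2)"
      unfolding E1 A_def B_def W_def ..
    also have "\<dots> \<le> (A + W) * cmod x1 ^ 2 + (B + W) * cmod x2 ^ 2 + 2 * g * cmod x1 * cmod x2"
    proof -
      have "Re ((cnj a * w + cnj w * b) * cnj x1 * x2) \<le> cmod ((cnj a * w + cnj w * b) * cnj x1 * x2)"
        by (rule complex_Re_le_cmod)
      also have "\<dots> = g * cmod x1 * cmod x2" unfolding g_def by (simp add: norm_mult)
      finally show ?thesis by simp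
    qed
    also have "\<dots> \<le> (A + W) * cmod x1 ^ 2 + (B + W) * cmod x2 ^ 2 + (al * cmod x1 ^ 2 + be * cmod x2 ^ 2)"
      using psd2[OF al0 be0 albe, of "cmod x1" "cmod x2"] by simp
    also have "\<dots> = la * (cmod x1 ^ 2 + cmod x2 ^ 2)" unfolding al_def be_def by (simp add: algebra_simps)
    also have "\<dots> = (sqrt la * norm x) ^ 2" unfolding xe using la0 by (simp add: power_mult_distrib norm_vec2)
    finally have "norm (M *v x) ^ 2 \<le> (sqrt la * norm x) ^ 2" .
    then show ?thesis by (rule power2_le_imp_le) (simp add: la0)
  qed
  have "onorm (\<lambda>v. M *v v) \<le> sqrt la" by (rule onorm_le) (rule bound)
  also have "sqrt la < 1" using la1 la0 by simp
  finally have on: "onorm (\<lambda>v. M *v v) < 1" .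
  have "det M = p" unfolding M_def det_mat2 ww by simp
  moreover have "transpose M = M" unfolding M_def transpose_mat2 ..
  ultimately show ?thesis unfolding T9_def using on by (intro exI[of _ M]) (simp add: M_def)
qed




definition "phi1 a b p z = (if a*b = p then a else (p*z - a)/(b*z - 1))"
definition "def1 a b p z \<longleftrightarrow> (a*b = p \<or> b*z \<noteq> 1)"
definition "H1 a b p = (if \<forall>z\<in>ball 0 1. def1 a b p z then (SUP z\<in>ball 0 1. ereal (cmod (phi1 a b p z))) else \<infinity>)"
definition "T3 a b p \<longleftrightarrow> H1 a b p < 1 \<and> (a*b = p \<longrightarrow> cmod b < 1)"

lemma bw_ne: "cmod b < 1 \<Longrightarrow> cmod w \<le> 1 \<Longrightarrow> cmod (b*w - 1) > 0"
proof -
  assume b: "cmod b < 1" and w: "cmod w \<le> 1"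
  have "cmod b * cmod w \<le> cmod b" using w by (simp add: mult_left_le)
  then have "cmod (b*w) < 1" using b by (simp add: norm_mult)
  then show ?thesis by auto
qed

lemma T3_Mc_deg: assumes True: "a*b = p" shows "T3 a b p \<longleftrightarrow> Mc a b p"
proof -
  have ne: "ball (0::complex) 1 \<noteq> {}" by (simp add: ball_eq_empty) 
  have H: "H1 a b p = ereal (cmod a)" unfolding H1_def def1_def phi1_def using True ne by simp
  have "Mc a b p \<longleftrightarrow> cmod a < 1 \<and> cmod b < 1"
  proof
    assume M: "Mc a b p"
    then have H: "\<forall>w. cmod w \<le> 1 \<longrightarrow> cmod (p*w - a) < cmod (b*w - 1)" unfolding Mc_def by blast
    have "cmod (p*0 - a) < cmod (b*0 - 1)" using H[rule_format, of 0] by simp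
    then show "cmod a < 1 \<and> cmod b < 1" using M unfolding Mc_def by simp
  next
    assume ab: "cmod a < 1 \<and> cmod b < 1"
    have "cmod (p*w - a) < cmod (b*w - 1)" if w: "cmod w \<le> 1" for w
    proof -
      have "p*w - a = a * (b*w - 1)" using True by (simp add: algebra_simps)
      then have "cmod (p*w - a) = cmod a * cmod (b*w - 1)" by (simp add: norm_mult)
      also have "\<dots> < cmod (b*w - 1)" using ab bw_ne[of b w] w by simp
      finally show ?thesis .
    qed
    then show "Mc a b p" using ab unfolding Mc_def by blast
  qed
  then show ?thesis unfolding T3_def H using True by auto
qed

lemma Mc_T3_nd: assumes False: "a*b \<noteq> p" and M: "Mc a b p" shows "T3 a b p"
proof -
  have b1: "cmod b < 1" using M unfolding Mc_def by simp
  have T4: "T4 a b p" using M Mc_T5 T5_T4 by blast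
  define r where "r = (cmod (a - cnj b * p) + cmod (a*b - p)) / (1 - cmod b ^ 2)"
  have K: "1 - cmod b ^ 2 > 0" using b1 by (simp add: abs_square_less_1)
  have r1: "r < 1" using T4 K unfolding r_def T4_def by simp
  have "cmod (phi1 a b p z) \<le> r" if z: "z \<in> ball 0 1" for z
  proof -
    have zl: "cmod z \<le> 1" using z by simp
    have Y: "cmod (b*z - 1) > 0" using bw_ne[OF b1 zl] .
    have "cmod (p*z - a) * (1 - cmod b ^ 2) \<le> (cmod (a - cnj b * p) + cmod (a*b - p)) * cmod (b*z - 1)"
      using T4_bound[OF T4 zl] .
    then have "cmod (p*z - a) \<le> r * cmod (b*z - 1)" using K unfolding r_def
      by (simp add: field_simps)
    then show ?thesis using False Y unfolding phi1_def by (simp add: norm_divide divide_le_eq)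
  qed
  then have "(SUP z\<in>ball 0 1. ereal (cmod (phi1 a b p z))) \<le> ereal r" by (intro SUP_least) simp
  also have "ereal r < 1" using r1 by simp
  finally have S: "(SUP z\<in>ball 0 1. ereal (cmod (phi1 a b p z))) < 1" .
  have "\<forall>z\<in>ball 0 1. def1 a b p z" using bw_ne[OF b1] unfolding def1_def by force
  then show ?thesis unfolding T3_def H1_def using S False by simp
qed

lemma T3_Mc_nd: assumes False: "a*b \<noteq> p" and T: "T3 a b p" shows "Mc a b p"
proof -
  have D: "\<forall>z\<in>ball 0 1. def1 a b p z" and S: "(SUP z\<in>ball 0 1. ereal (cmod (phi1 a b p z))) < 1"
    using T unfolding T3_def H1_def by (auto split: if_splits)
  have bl: "cmod b \<le> 1"
  proof (rule ccontr)
    assume "\<not> cmod b \<le> 1"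
    then have "b \<noteq> 0" "1/b \<in> ball 0 1" by (auto simp: norm_divide divide_less_eq)
    then show False using D False unfolding def1_def by force
  qed
  define s where "s = (SUP z\<in>ball 0 1. ereal (cmod (phi1 a b p z)))"
  have "ereal (cmod (phi1 a b p 0)) \<le> s" unfolding s_def by (rule SUP_upper) simp
  moreover have "ereal 0 \<le> ereal (cmod (phi1 a b p 0))" by simp
  ultimately have s0: "s \<ge> 0" using order_trans zero_ereal_def by metis
  obtain s' where s': "s = ereal s'" using s0 S unfolding s_def[symmetric]
    by (cases s) auto
  have s'1: "s' < 1" using S s' unfolding s_def[symmetric] by simp
  have s'0: "s' \<ge> 0" using s0 s' by simp
  have inball: "cmod (p*z - a) \<le> s' * cmod (b*z - 1)" if z: "z \<in> ball 0 1" for z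
  proof -
    have "cmod z < 1" using z by simp
    have "cmod b * cmod z \<le> cmod z" using bl by (simp add: mult_left_le_one_le)
    then have "cmod (b*z) < 1" using \<open>cmod z < 1\<close> by (simp add: norm_mult)
    then have Y: "cmod (b*z - 1) > 0" by auto
    have "ereal (cmod (phi1 a b p z)) \<le> s" unfolding s_def using z by (rule SUP_upper)
    then have "cmod ((p*z - a)/(b*z - 1)) \<le> s'" using s' False unfolding phi1_def by simp
    then show ?thesis using Y by (simp add: norm_divide divide_le_eq)
  qed
  have cl: "closed {z. cmod (p*z - a) \<le> s' * cmod (b*z - 1)}"
    by (intro closed_Collect_le continuous_intros)
  have "closure (ball 0 1) \<subseteq> {z. cmod (p*z - a) \<le> s' * cmod (b*z - 1)}"
    using inball cl by (intro closure_minimal) auto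
  then have incb: "cmod (p*w - a) \<le> s' * cmod (b*w - 1)" if "cmod w \<le> 1" for w
    using that by auto
  have b1: "cmod b < 1"
  proof (rule ccontr)
    assume "\<not> cmod b < 1"
    then have bb: "cmod b = 1" using bl by simp
    have "b * cnj b = 1" using bb by (metis complex_norm_square mult.commute of_real_1 one_power2)
    then have "cmod (p * cnj b - a) \<le> 0" using incb[of "cnj b"] bb by simp
    then have "a = p * cnj b" by simp
    then have "a * b = p" using \<open>b * cnj b = 1\<close> by (simp add: algebra_simps)
    then show False using False by simp
  qed
  have "cmod (p*w - a) < cmod (b*w - 1)" if w: "cmod w \<le> 1" for w
  proof -
    have "cmod (p*w - a) \<le> s' * cmod (b*w - 1)" using incb w .
    also have "\<dots> < cmod (b*w - 1)" using s'1 bw_ne[OF b1 w] by simp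
    finally show ?thesis .
  qed
  then show ?thesis using b1 unfolding Mc_def by blast
qed

lemma T3_Mc: "T3 a b p \<longleftrightarrow> Mc a b p"
  using T3_Mc_deg Mc_T3_nd T3_Mc_nd by blast




lemma pair_all:
  shows "T7 a b p \<longleftrightarrow> T2 a b p" "T7 a b p \<longleftrightarrow> T3 a b p" "T7 a b p \<longleftrightarrow> T3 b a p"
    "T7 a b p \<longleftrightarrow> T4 a b p" "T7 a b p \<longleftrightarrow> T4 b a p" "T7 a b p \<longleftrightarrow> T5 a b p" "T7 a b p \<longleftrightarrow> T5 b a p"
    "T7 a b p \<longleftrightarrow> T6 a b p" "T7 a b p \<longleftrightarrow> T8 a b p" "T7 a b p \<longleftrightarrow> T9 a b p"
proof -
  have sym: "T7 a b p \<longleftrightarrow> T7 b a p" unfolding T7_def by (simp add: add.commute)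
  have 89: "T7 a b p \<longleftrightarrow> T8 a b p" "T7 a b p \<longleftrightarrow> T9 a b p"
  proof -
    have "T9 a b p \<Longrightarrow> T8 a b p" unfolding T9_def T8_def by blast
    moreover have "T8 a b p \<Longrightarrow> T7 a b p" using T8_T2 core_equiv(5) by blast
    moreover have "T7 a b p \<Longrightarrow> T9 a b p" using T6_T9 core_equiv(3) by blast
    ultimately show "T7 a b p \<longleftrightarrow> T8 a b p" "T7 a b p \<longleftrightarrow> T9 a b p" by blast+
  qed
  show "T7 a b p \<longleftrightarrow> T2 a b p" "T7 a b p \<longleftrightarrow> T3 a b p" "T7 a b p \<longleftrightarrow> T3 b a p"
    "T7 a b p \<longleftrightarrow> T4 a b p" "T7 a b p \<longleftrightarrow> T4 b a p" "T7 a b p \<longleftrightarrow> T5 a b p" "T7 a b p \<longleftrightarrow> T5 b a p"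
    "T7 a b p \<longleftrightarrow> T6 a b p" "T7 a b p \<longleftrightarrow> T8 a b p" "T7 a b p \<longleftrightarrow> T9 a b p"
    using core_equiv[of a b p] core_equiv[of b a p] T3_Mc[of a b p] T3_Mc[of b a p] sym 89 by blast+
qed

lemma cnj_scale: "cnj (of_real c * x) = of_real c * cnj x" by simp

lemma sc_norms: assumes "c > 0" "a = of_real c * x1" "b = of_real c * x2"
  shows "cmod (a - cnj b * q) = c * cmod (x1 - cnj x2 * q)"
    "cmod (b - cnj a * q) = c * cmod (x2 - cnj x1 * q)"
    "cmod (a * b - of_real (c^2) * q) = c^2 * cmod (x1 * x2 - q)"
    "cmod a = c * cmod x1" "cmod b = c * cmod x2"
proof -
  have 1: "a - cnj b * q = of_real c * (x1 - cnj x2 * q)" using assms by (simp add: algebra_simps)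
  have 2: "b - cnj a * q = of_real c * (x2 - cnj x1 * q)" using assms by (simp add: algebra_simps)
  have 3: "a * b - of_real (c^2) * q = of_real (c^2) * (x1 * x2 - q)" using assms
    by (simp add: algebra_simps power2_eq_square)
  show "cmod (a - cnj b * q) = c * cmod (x1 - cnj x2 * q)" unfolding 1 norm_mult norm_of_real using assms(1) by simp
  show "cmod (b - cnj a * q) = c * cmod (x2 - cnj x1 * q)" unfolding 2 norm_mult norm_of_real using assms(1) by simp
  show "cmod (a * b - of_real (c^2) * q) = c^2 * cmod (x1 * x2 - q)" unfolding 3 norm_mult norm_of_real by simp
  show "cmod a = c * cmod x1" "cmod b = c * cmod x2" unfolding assms(2,3) norm_mult norm_of_real using assms(1) by simp_all
qed

lemma c2_cancel: "(c::real) > 0 \<Longrightarrow> (c^2 * X < c^2 * Y \<longleftrightarrow> X < Y)"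
  by (simp add: mult_less_cancel_left_pos)

lemma S2: assumes "c > 0" "a = of_real c * x1" "b = of_real c * x2"
  shows "(\<forall>z\<in>cball 0 1. \<forall>w\<in>cball 0 1. of_real c - a * z - b * w + of_real c * q * z * w \<noteq> 0) \<longleftrightarrow> T2 x1 x2 q"
proof -
  have "of_real c - a * z - b * w + of_real c * q * z * w = of_real c * (1 - x1*z - x2*w + q*z*w)" for z w
    using assms by (simp add: algebra_simps)
  then show ?thesis unfolding T2_def Ball_def mem_cball_0 using assms(1) by simp
qed

lemma S4: assumes "c > 0" "a = of_real c * x1" "b = of_real c * x2"
  shows "(c * cmod (a - cnj b * q) + cmod (a * b - of_real (c^2) * q) < c^2 - cmod b ^ 2) \<longleftrightarrow> T4 x1 x2 q"
proof -
  note n = sc_norms[OF assms]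
  have "c * cmod (a - cnj b * q) + cmod (a * b - of_real (c^2) * q) = c^2 * (cmod (x1 - cnj x2 * q) + cmod (x1*x2 - q))"
    unfolding n by (simp add: power2_eq_square algebra_simps)
  moreover have "c^2 - cmod b ^ 2 = c^2 * (1 - cmod x2 ^ 2)" unfolding n by (simp add: power2_eq_square algebra_simps)
  ultimately show ?thesis unfolding T4_def using c2_cancel[OF assms(1)] by simp
qed

lemma S4': assumes "c > 0" "a = of_real c * x1" "b = of_real c * x2"
  shows "(c * cmod (b - cnj a * q) + cmod (a * b - of_real (c^2) * q) < c^2 - cmod a ^ 2) \<longleftrightarrow> T4 x2 x1 q"
proof -
  have e: "b * a = a * b" by (rule mult.commute)
  show ?thesis using S4[OF assms(1,3,2)] unfolding e .
qed

lemma S5: assumes "c > 0" "a = of_real c * x1" "b = of_real c * x2"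
  shows "(cmod a ^ 2 - cmod b ^ 2 + c^2 * cmod q ^ 2 + 2 * c * cmod (b - cnj a * q) < c^2 \<and> cmod b < c) \<longleftrightarrow> T5 x1 x2 q"
proof -
  note n = sc_norms[OF assms]
  have "cmod a ^ 2 - cmod b ^ 2 + c^2 * cmod q ^ 2 + 2 * c * cmod (b - cnj a * q) =
      c^2 * (cmod x1 ^ 2 - cmod x2 ^ 2 + cmod q ^ 2 + 2 * cmod (x2 - cnj x1 * q))"
    unfolding n by (simp add: power2_eq_square algebra_simps)
  moreover have "c^2 = c^2 * 1" by simp
  moreover have "cmod b < c \<longleftrightarrow> cmod x2 < 1" unfolding n using assms(1) by simp
  ultimately show ?thesis unfolding T5_def using c2_cancel[OF assms(1)] by metis
qed

lemma S5': assumes "c > 0" "a = of_real c * x1" "b = of_real c * x2"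
  shows "(cmod b ^ 2 - cmod a ^ 2 + c^2 * cmod q ^ 2 + 2 * c * cmod (a - cnj b * q) < c^2 \<and> cmod a < c) \<longleftrightarrow> T5 x2 x1 q"
  using S5[OF assms(1,3,2)] .

lemma S6: assumes "c > 0" "a = of_real c * x1" "b = of_real c * x2"
  shows "(cmod q < 1 \<and> cmod a ^ 2 + cmod b ^ 2 - c^2 * cmod q ^ 2 + 2 * cmod (a * b - of_real (c^2) * q) < c^2) \<longleftrightarrow> T6 x1 x2 q"
proof -
  note n = sc_norms[OF assms]
  have "cmod a ^ 2 + cmod b ^ 2 - c^2 * cmod q ^ 2 + 2 * cmod (a * b - of_real (c^2) * q) =
      c^2 * (cmod x1 ^ 2 + cmod x2 ^ 2 - cmod q ^ 2 + 2 * cmod (x1 * x2 - q))"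
    unfolding n by (simp add: power2_eq_square algebra_simps)
  moreover have "c^2 = c^2 * 1" by simp
  ultimately show ?thesis unfolding T6_def using c2_cancel[OF assms(1)] by metis
qed

lemma S7: assumes "c > 0" "a = of_real c * x1" "b = of_real c * x2"
  shows "(cmod (b - cnj a * q) + cmod (a - cnj b * q) < c * (1 - cmod q ^ 2)) \<longleftrightarrow> T7 x1 x2 q"
proof -
  note n = sc_norms[OF assms]
  have "cmod (b - cnj a * q) + cmod (a - cnj b * q) = c * (cmod (x2 - cnj x1 * q) + cmod (x1 - cnj x2 * q))"
    unfolding n by (simp add: algebra_simps)
  then show ?thesis unfolding T7_def using assms(1) by (simp add: mult_less_cancel_left_pos)
qed

lemma S8: assumes "c > 0" "a = of_real c * x1" "b = of_real c * x2"
  shows "(\<exists>M::complex^2^2. onorm (\<lambda>v. M *v v) < 1 \<and> a = of_real c * M $ 1 $ 1 \<and> b = of_real c * M $ 2 $ 2 \<and> det M = q)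
    \<longleftrightarrow> T8 x1 x2 q"
  unfolding T8_def using assms by (simp add: eq_commute[of x1] eq_commute[of x2])

lemma S9: assumes "c > 0" "a = of_real c * x1" "b = of_real c * x2"
  shows "(\<exists>M::complex^2^2. onorm (\<lambda>v. M *v v) < 1 \<and> transpose M = M \<and> a = of_real c * M $ 1 $ 1 \<and> b = of_real c * M $ 2 $ 2 \<and> det M = q)
    \<longleftrightarrow> T9 x1 x2 q"
  unfolding T9_def using assms by (simp add: eq_commute[of x1] eq_commute[of x2])

lemma Phi_scale: assumes "cb n j = c" "c > 0" "y j = of_real c * x1" "y (n - j) = of_real c * x2"
  shows "Phi_Hinf n y q j = H1 x1 x2 q"
proof -
  have cz: "(of_real c :: complex) \<noteq> 0" using assms(2) by simp
  have e1: "y j * y (n - j) = of_real (cb n j ^ 2) * q \<longleftrightarrow> x1 * x2 = q"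
    using assms cz by (simp add: power2_eq_square algebra_simps)
  have d: "Phi_defined n y q j z \<longleftrightarrow> def1 x1 x2 q z" for z
  proof -
    have "y (n - j) * z \<noteq> of_real (cb n j) \<longleftrightarrow> x2 * z \<noteq> 1" using assms cz by (auto simp: mult.assoc)
    then show ?thesis unfolding Phi_defined_def def1_def e1 by simp
  qed
  have ph: "Phi n y q j z = phi1 x1 x2 q z" for z
  proof (cases "x1 * x2 = q")
    case True then show ?thesis unfolding Phi_def phi1_def e1 using assms cz by simp
  next
    case False
    have "(of_real (cb n j) * q * z - y j) / (y (n - j) * z - of_real (cb n j)) =
       (of_real c * (q * z - x1)) / (of_real c * (x2 * z - 1))" using assms by (simp add: algebra_simps)
    also have "\<dots> = (q * z - x1) / (x2 * z - 1)" using cz by simp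
    finally show ?thesis unfolding Phi_def phi1_def e1 using False by simp
  qed
  show ?thesis unfolding Phi_Hinf_def H1_def d ph ..
qed




lemma beta_id: assumes "k = 1 - cmod q ^ 2" "k \<noteq> 0"
  shows "Y1 = (Y1 - cnj Y2 * q) / of_real k + cnj ((Y2 - cnj Y1 * q) / of_real k) * q"
proof -
  have qq: "cnj q * q = of_real (cmod q ^ 2)" by (simp only: complex_norm_square) (simp add: mult.commute)
  have kk: "(of_real k :: complex) = 1 - cnj q * q" unfolding qq assms(1) by simp
  have kz: "(of_real k :: complex) \<noteq> 0" using assms(2) by simp
  have c1: "cnj ((Y2 - cnj Y1 * q) / of_real k) = (cnj Y2 - Y1 * cnj q) / of_real k" by simp
  have "(Y1 - cnj Y2 * q) / of_real k + (cnj Y2 - Y1 * cnj q) / of_real k * q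
      = (Y1 - cnj Y2 * q + (cnj Y2 - Y1 * cnj q) * q) / of_real k" by (simp add: add_divide_distrib)
  also have "Y1 - cnj Y2 * q + (cnj Y2 - Y1 * cnj q) * q = Y1 * of_real k" unfolding kk by (simp add: algebra_simps)
  also have "Y1 * of_real k / of_real k = Y1" using kz by simp
  finally show ?thesis unfolding c1 by simp
qed

lemma beta_diff: assumes "Y1 = b1 + cnj b2 * q" "Y2 = b2 + cnj b1 * q"
  shows "Y1 - cnj Y2 * q = b1 * of_real (1 - cmod q ^ 2)"
proof -
  have qq: "cnj q * q = of_real (cmod q ^ 2)" by (simp only: complex_norm_square) (simp add: mult.commute)
  have "Y1 - cnj Y2 * q = b1 * (1 - cnj q * q)" using assms by (simp add: algebra_simps)
  then show ?thesis unfolding qq by simp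
qed

lemma ball_iff: "(\<And>j. j \<in> R \<Longrightarrow> (A j \<longleftrightarrow> B j)) \<Longrightarrow> ((\<forall>j\<in>R. A j) \<longleftrightarrow> (\<forall>j\<in>R. B j))" by blast

lemma S3: assumes "c > 0" "cb n j = c" "y j = of_real c * x1" "y (n - j) = of_real c * x2"
  shows "(Phi_Hinf n y q j < 1 \<and> (y j * y (n - j) = of_real (c^2) * q \<longrightarrow> cmod (y (n - j)) < c)) \<longleftrightarrow> T3 x1 x2 q"
proof -
  have cz: "(of_real c :: complex) \<noteq> 0" using assms(1) by simp
  have e1: "y j * y (n - j) = of_real (c ^ 2) * q \<longleftrightarrow> x1 * x2 = q"
    using assms cz by (simp add: power2_eq_square algebra_simps)
  have e2: "cmod (y (n - j)) < c \<longleftrightarrow> cmod x2 < 1" using assms by (simp add: norm_mult)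
  show ?thesis unfolding T3_def e1 e2 Phi_scale[OF assms(2,1,3,4)] ..
qed

lemma S3': assumes "c > 0" "cb n (n - j) = c" "n - (n - j) = j" "y j = of_real c * x1" "y (n - j) = of_real c * x2"
  shows "(Phi_Hinf n y q (n - j) < 1 \<and> (y j * y (n - j) = of_real (c^2) * q \<longrightarrow> cmod (y j) < c)) \<longleftrightarrow> T3 x2 x1 q"
proof -
  have y': "y (n - (n - j)) = of_real c * x1" using assms(3,4) by simp
  have cz: "(of_real c :: complex) \<noteq> 0" using assms(1) by simp
  have e1: "y j * y (n - j) = of_real (c ^ 2) * q \<longleftrightarrow> x2 * x1 = q"
    using assms cz by (simp add: power2_eq_square algebra_simps)
  have e2: "cmod (y j) < c \<longleftrightarrow> cmod x1 < 1" using assms by (simp add: norm_mult)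
  show ?thesis unfolding T3_def e1 e2 Phi_scale[OF assms(2,1) assms(5) y'] ..
qed

theorem mainTheorem2:
  fixes n :: nat and y :: "nat \<Rightarrow> complex" and q :: complex
  assumes "n \<ge> 2"
  defines "c \<equiv> cb n"
  defines "P1 \<equiv> tetrablock_n n y q"
  defines "P2 \<equiv> (\<forall>j\<in>{1..n div 2}. \<forall>z\<in>cball 0 1. \<forall>w\<in>cball 0 1.
              of_real (c j) - y j * z - y (n - j) * w + of_real (c j) * q * z * w \<noteq> 0)"
  defines "P3 \<equiv> (\<forall>j\<in>{1..n div 2}. Phi_Hinf n y q j < 1 \<and>
              (y j * y (n - j) = of_real (c j ^ 2) * q \<longrightarrow> cmod (y (n - j)) < c j))"
  defines "P3' \<equiv> (\<forall>j\<in>{1..n div 2}. Phi_Hinf n y q (n - j) < 1 \<and>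
              (y j * y (n - j) = of_real (c j ^ 2) * q \<longrightarrow> cmod (y j) < c j))"
  defines "P4 \<equiv> (\<forall>j\<in>{1..n div 2}.
              c j * cmod (y j - cnj (y (n - j)) * q) + cmod (y j * y (n - j) - of_real (c j ^ 2) * q)
              < c j ^ 2 - cmod (y (n - j)) ^ 2)"
  defines "P4' \<equiv> (\<forall>j\<in>{1..n div 2}.
              c j * cmod (y (n - j) - cnj (y j) * q) + cmod (y j * y (n - j) - of_real (c j ^ 2) * q)
              < c j ^ 2 - cmod (y j) ^ 2)"
  defines "P5 \<equiv> (\<forall>j\<in>{1..n div 2}.
              cmod (y j) ^ 2 - cmod (y (n - j)) ^ 2 + c j ^ 2 * cmod q ^ 2
                + 2 * c j * cmod (y (n - j) - cnj (y j) * q) < c j ^ 2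
              \<and> cmod (y (n - j)) < c j)"
  defines "P5' \<equiv> (\<forall>j\<in>{1..n div 2}.
              cmod (y (n - j)) ^ 2 - cmod (y j) ^ 2 + c j ^ 2 * cmod q ^ 2
                + 2 * c j * cmod (y j - cnj (y (n - j)) * q) < c j ^ 2
              \<and> cmod (y j) < c j)"
  defines "P6 \<equiv> (cmod q < 1 \<and> (\<forall>j\<in>{1..n div 2}.
              cmod (y j) ^ 2 + cmod (y (n - j)) ^ 2 - c j ^ 2 * cmod q ^ 2
                + 2 * cmod (y j * y (n - j) - of_real (c j ^ 2) * q) < c j ^ 2))"
  defines "P7 \<equiv> (\<forall>j\<in>{1..n div 2}.
              cmod (y (n - j) - cnj (y j) * q) + cmod (y j - cnj (y (n - j)) * q)
              < c j * (1 - cmod q ^ 2))"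
  defines "P8 \<equiv> (\<exists>B :: nat \<Rightarrow> complex^2^2. \<forall>j\<in>{1..n div 2}.
              onorm (\<lambda>v. B j *v v) < 1 \<and>
              y j = of_real (c j) * B j $ 1 $ 1 \<and> y (n - j) = of_real (c j) * B j $ 2 $ 2 \<and>
              det (B j) = q)"
  defines "P9 \<equiv> (\<exists>B :: nat \<Rightarrow> complex^2^2. \<forall>j\<in>{1..n div 2}.
              onorm (\<lambda>v. B j *v v) < 1 \<and> transpose (B j) = B j \<and>
              y j = of_real (c j) * B j $ 1 $ 1 \<and> y (n - j) = of_real (c j) * B j $ 2 $ 2 \<and>
              det (B j) = q)"
  shows "(P1 \<longleftrightarrow> P2) \<and> (P1 \<longleftrightarrow> P3) \<and> (P1 \<longleftrightarrow> P3') \<and> (P1 \<longleftrightarrow> P4) \<and> (P1 \<longleftrightarrow> P4')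
       \<and> (P1 \<longleftrightarrow> P5) \<and> (P1 \<longleftrightarrow> P5') \<and> (P1 \<longleftrightarrow> P6) \<and> (P1 \<longleftrightarrow> P7)
       \<and> (P1 \<longleftrightarrow> P8) \<and> (P1 \<longleftrightarrow> P9)"
proof -
  define R where "R = {1..n div 2}"
  have jR: "1 \<le> j \<and> j \<le> n \<and> 1 \<le> n - j \<and> n - j \<le> n \<and> n - (n - j) = j \<and> j \<le> n - j" if "j \<in> R" for j
    using that assms(1) unfolding R_def by auto
  have cpos: "c j > 0" if "j \<le> n" for j unfolding c_def cb_def using that by simp
  have csym: "c (n - j) = c j" if "j \<le> n" for j unfolding c_def cb_def using that by (simp add: binomial_symmetric[symmetric])
  define x1 where "x1 j = y j / of_real (c j)" for j
  define x2 where "x2 j = y (n - j) / of_real (c j)" for j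
  have ya: "y j = of_real (c j) * x1 j" if "j \<in> R" for j
    using cpos[of j] jR[OF that] unfolding x1_def by simp
  have yb: "y (n - j) = of_real (c j) * x2 j" if "j \<in> R" for j
    using cpos[of j] jR[OF that] unfolding x2_def by simp
  note sc = cpos[OF conjunct1[OF conjunct2[OF jR]]] ya yb
  have R1: "1 \<in> R" using assms(1) unfolding R_def by auto
  have e2: "P2 \<longleftrightarrow> (\<forall>j\<in>R. T2 (x1 j) (x2 j) q)"
    unfolding P2_def R_def[symmetric] by (rule ball_iff) (rule S2[OF sc])
  have e3: "P3 \<longleftrightarrow> (\<forall>j\<in>R. T3 (x1 j) (x2 j) q)"
    unfolding P3_def R_def[symmetric]
  proof (rule ball_iff)
    fix j assume j: "j \<in> R"
    have cj: "c j > 0" using cpos jR[OF j] by blast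
    have cb: "cb n j = c j" by (simp add: c_def)
    show "(Phi_Hinf n y q j < 1 \<and> (y j * y (n - j) = of_real (c j ^ 2) * q \<longrightarrow> cmod (y (n - j)) < c j))
        \<longleftrightarrow> T3 (x1 j) (x2 j) q" by (rule S3[OF cj cb ya[OF j] yb[OF j]])
  qed
  have e3': "P3' \<longleftrightarrow> (\<forall>j\<in>R. T3 (x2 j) (x1 j) q)"
  proof -
    have "cb n (n - j) = c j" if "j \<in> R" for j using csym[of j] jR[OF that] by (simp add: c_def)
    then show ?thesis unfolding P3'_def R_def[symmetric]
    proof (intro ball_iff)
      fix j assume j: "j \<in> R"
      have cj: "c j > 0" using cpos jR[OF j] by blast
      have cb: "cb n (n - j) = c j" using csym[of j] jR[OF j] by (simp add: c_def)
      have nn: "n - (n - j) = j" using jR[OF j] by blast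
      show "(Phi_Hinf n y q (n - j) < 1 \<and> (y j * y (n - j) = of_real (c j ^ 2) * q \<longrightarrow> cmod (y j) < c j))
        \<longleftrightarrow> T3 (x2 j) (x1 j) q" by (rule S3'[OF cj cb nn ya[OF j] yb[OF j]])
    qed
  qed
  have e4: "P4 \<longleftrightarrow> (\<forall>j\<in>R. T4 (x1 j) (x2 j) q)"
    unfolding P4_def R_def[symmetric] by (rule ball_iff) (rule S4[OF sc])
  have e4': "P4' \<longleftrightarrow> (\<forall>j\<in>R. T4 (x2 j) (x1 j) q)"
    unfolding P4'_def R_def[symmetric] by (rule ball_iff) (rule S4'[OF sc])
  have e5: "P5 \<longleftrightarrow> (\<forall>j\<in>R. T5 (x1 j) (x2 j) q)"
    unfolding P5_def R_def[symmetric] by (rule ball_iff) (rule S5[OF sc])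
  have e5': "P5' \<longleftrightarrow> (\<forall>j\<in>R. T5 (x2 j) (x1 j) q)"
    unfolding P5'_def R_def[symmetric] by (rule ball_iff) (rule S5'[OF sc])
  have e6: "P6 \<longleftrightarrow> (\<forall>j\<in>R. T6 (x1 j) (x2 j) q)"
  proof -
    have "P6 \<longleftrightarrow> (\<forall>j\<in>R. cmod q < 1 \<and> cmod (y j) ^ 2 + cmod (y (n - j)) ^ 2 - c j ^ 2 * cmod q ^ 2
                + 2 * cmod (y j * y (n - j) - of_real (c j ^ 2) * q) < c j ^ 2)"
      unfolding P6_def R_def[symmetric] using R1 by blast
    also have "\<dots> \<longleftrightarrow> (\<forall>j\<in>R. T6 (x1 j) (x2 j) q)" by (rule ball_iff) (rule S6[OF sc])
    finally show ?thesis .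
  qed
  have e7: "P7 \<longleftrightarrow> (\<forall>j\<in>R. T7 (x1 j) (x2 j) q)"
    unfolding P7_def R_def[symmetric] by (rule ball_iff) (rule S7[OF sc])
  have e8: "P8 \<longleftrightarrow> (\<forall>j\<in>R. T8 (x1 j) (x2 j) q)"
  proof -
    have "P8 \<longleftrightarrow> (\<forall>j\<in>R. \<exists>M::complex^2^2. onorm (\<lambda>v. M *v v) < 1 \<and>
              y j = of_real (c j) * M $ 1 $ 1 \<and> y (n - j) = of_real (c j) * M $ 2 $ 2 \<and> det M = q)"
      unfolding P8_def R_def[symmetric]
    proof
      assume "\<exists>B::nat \<Rightarrow> complex^2^2. \<forall>j\<in>R. onorm (\<lambda>v. B j *v v) < 1 \<and>
              y j = of_real (c j) * B j $ 1 $ 1 \<and> y (n - j) = of_real (c j) * B j $ 2 $ 2 \<and> det (B j) = q"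
      then show "\<forall>j\<in>R. \<exists>M::complex^2^2. onorm (\<lambda>v. M *v v) < 1 \<and>
              y j = of_real (c j) * M $ 1 $ 1 \<and> y (n - j) = of_real (c j) * M $ 2 $ 2 \<and> det M = q" by blast
    next
      assume "\<forall>j\<in>R. \<exists>M::complex^2^2. onorm (\<lambda>v. M *v v) < 1 \<and>
              y j = of_real (c j) * M $ 1 $ 1 \<and> y (n - j) = of_real (c j) * M $ 2 $ 2 \<and> det M = q"
      then show "\<exists>B::nat \<Rightarrow> complex^2^2. \<forall>j\<in>R. onorm (\<lambda>v. B j *v v) < 1 \<and>
              y j = of_real (c j) * B j $ 1 $ 1 \<and> y (n - j) = of_real (c j) * B j $ 2 $ 2 \<and> det (B j) = q"
        by (rule bchoice)
    qed
    also have "\<dots> \<longleftrightarrow> (\<forall>j\<in>R. T8 (x1 j) (x2 j) q)" by (rule ball_iff) (rule S8[OF sc])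
    finally show ?thesis .
  qed
  have e9: "P9 \<longleftrightarrow> (\<forall>j\<in>R. T9 (x1 j) (x2 j) q)"
  proof -
    have "P9 \<longleftrightarrow> (\<forall>j\<in>R. \<exists>M::complex^2^2. onorm (\<lambda>v. M *v v) < 1 \<and> transpose M = M \<and>
              y j = of_real (c j) * M $ 1 $ 1 \<and> y (n - j) = of_real (c j) * M $ 2 $ 2 \<and> det M = q)"
      unfolding P9_def R_def[symmetric]
    proof
      assume "\<exists>B::nat \<Rightarrow> complex^2^2. \<forall>j\<in>R. onorm (\<lambda>v. B j *v v) < 1 \<and> transpose (B j) = B j \<and>
              y j = of_real (c j) * B j $ 1 $ 1 \<and> y (n - j) = of_real (c j) * B j $ 2 $ 2 \<and> det (B j) = q"
      then show "\<forall>j\<in>R. \<exists>M::complex^2^2. onorm (\<lambda>v. M *v v) < 1 \<and> transpose M = M \<and>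
              y j = of_real (c j) * M $ 1 $ 1 \<and> y (n - j) = of_real (c j) * M $ 2 $ 2 \<and> det M = q" by blast
    next
      assume "\<forall>j\<in>R. \<exists>M::complex^2^2. onorm (\<lambda>v. M *v v) < 1 \<and> transpose M = M \<and>
              y j = of_real (c j) * M $ 1 $ 1 \<and> y (n - j) = of_real (c j) * M $ 2 $ 2 \<and> det M = q"
      then show "\<exists>B::nat \<Rightarrow> complex^2^2. \<forall>j\<in>R. onorm (\<lambda>v. B j *v v) < 1 \<and> transpose (B j) = B j \<and>
              y j = of_real (c j) * B j $ 1 $ 1 \<and> y (n - j) = of_real (c j) * B j $ 2 $ 2 \<and> det (B j) = q"
        by (rule bchoice)
    qed
    also have "\<dots> \<longleftrightarrow> (\<forall>j\<in>R. T9 (x1 j) (x2 j) q)" by (rule ball_iff) (rule S9[OF sc])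
    finally show ?thesis .
  qed
  have e1: "P1 \<longleftrightarrow> P7"
  proof
    assume "P1"
    then obtain \<beta> where q1: "cmod q < 1" and \<beta>: "\<forall>j\<in>{1..n-1}. y j = \<beta> j + cnj (\<beta> (n - j)) * q \<and>
        cmod (\<beta> j) + cmod (\<beta> (n - j)) < cb n j"
      unfolding P1_def tetrablock_n_def by blast
    define k where "k = 1 - cmod q ^ 2"
    have kpos: "k > 0" using q1 unfolding k_def by (simp add: abs_square_less_1)
    show "P7" unfolding P7_def R_def[symmetric]
    proof
      fix j assume j: "j \<in> R"
      have j1: "j \<in> {1..n-1}" and j2: "n - j \<in> {1..n-1}" using jR[OF j] by auto
      have b1: "y j = \<beta> j + cnj (\<beta> (n - j)) * q" using \<beta> j1 by blast
      have b2: "y (n - j) = \<beta> (n - j) + cnj (\<beta> j) * q" using \<beta> j2 jR[OF j] by force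
      have bd: "cmod (\<beta> j) + cmod (\<beta> (n - j)) < c j" using \<beta> j1 unfolding c_def by blast
      have "cmod (y (n - j) - cnj (y j) * q) + cmod (y j - cnj (y (n - j)) * q)
          = (cmod (\<beta> (n - j)) + cmod (\<beta> j)) * k"
        unfolding beta_diff[OF b1 b2] beta_diff[OF b2 b1] norm_mult norm_of_real k_def[symmetric]
        using kpos by (simp add: algebra_simps)
      also have "\<dots> < c j * k" using bd kpos by (simp add: add.commute)
      finally show "cmod (y (n - j) - cnj (y j) * q) + cmod (y j - cnj (y (n - j)) * q) < c j * (1 - cmod q ^ 2)"
        unfolding k_def .
    qed
  next
    assume H: "P7"
    have "cmod (y (n - 1) - cnj (y 1) * q) + cmod (y 1 - cnj (y (n - 1)) * q) < c 1 * (1 - cmod q ^ 2)"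
      using H R1 unfolding P7_def R_def by blast
    then have "0 < c 1 * (1 - cmod q ^ 2)" by (smt (verit) norm_ge_zero)
    then have kp: "1 - cmod q ^ 2 > 0" using cpos[of 1] assms(1) by (simp add: zero_less_mult_iff)
    then have q1: "cmod q < 1" by (simp add: abs_square_less_1)
    define k where "k = 1 - cmod q ^ 2"
    define \<beta> where "\<beta> j = (y j - cnj (y (n - j)) * q) / of_real k" for j
    have "y j = \<beta> j + cnj (\<beta> (n - j)) * q \<and> cmod (\<beta> j) + cmod (\<beta> (n - j)) < cb n j"
      if j: "j \<in> {1..n-1}" for j
    proof
      have nn: "n - (n - j) = j" using j by auto
      show "y j = \<beta> j + cnj (\<beta> (n - j)) * q"
        unfolding \<beta>_def nn using beta_id[of k q] kp k_def by simp
      have "cmod (\<beta> j) + cmod (\<beta> (n - j)) = (cmod (y j - cnj (y (n - j)) * q) + cmod (y (n - j) - cnj (y j) * q)) / k"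
        unfolding \<beta>_def nn norm_divide norm_of_real using kp k_def by (simp add: add_divide_distrib)
      also have "\<dots> < cb n j"
      proof (cases "j \<le> n div 2")
        case True
        then have "j \<in> R" using j unfolding R_def by auto
        then have "cmod (y (n - j) - cnj (y j) * q) + cmod (y j - cnj (y (n - j)) * q) < c j * k"
          using H unfolding P7_def R_def k_def by blast
        then show ?thesis using kp k_def by (simp add: divide_less_eq c_def add.commute)
      next
        case False
        then have "n - j \<in> R" using j unfolding R_def by auto
        then have "cmod (y (n - (n - j)) - cnj (y (n - j)) * q) + cmod (y (n - j) - cnj (y (n - (n - j))) * q) < c (n - j) * k"
          using H unfolding P7_def R_def k_def by blast
        then show ?thesis using kp k_def csym[of j] j nn by (simp add: divide_less_eq c_def)
      qed
      finally show "cmod (\<beta> j) + cmod (\<beta> (n - j)) < cb n j" .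
    qed
    then show "P1" unfolding P1_def tetrablock_n_def using q1 by blast
  qed
  define Q where "Q = (\<forall>j\<in>R. T7 (x1 j) (x2 j) q)"
  have f2: "(\<forall>j\<in>R. T2 (x1 j) (x2 j) q) = Q" unfolding Q_def by (rule ball_iff) (rule pair_all(1)[symmetric])
  have f3: "(\<forall>j\<in>R. T3 (x1 j) (x2 j) q) = Q" unfolding Q_def by (rule ball_iff) (rule pair_all(2)[symmetric])
  have f3': "(\<forall>j\<in>R. T3 (x2 j) (x1 j) q) = Q" unfolding Q_def by (rule ball_iff) (rule pair_all(3)[symmetric])
  have f4: "(\<forall>j\<in>R. T4 (x1 j) (x2 j) q) = Q" unfolding Q_def by (rule ball_iff) (rule pair_all(4)[symmetric])
  have f4': "(\<forall>j\<in>R. T4 (x2 j) (x1 j) q) = Q" unfolding Q_def by (rule ball_iff) (rule pair_all(5)[symmetric])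
  have f5: "(\<forall>j\<in>R. T5 (x1 j) (x2 j) q) = Q" unfolding Q_def by (rule ball_iff) (rule pair_all(6)[symmetric])
  have f5': "(\<forall>j\<in>R. T5 (x2 j) (x1 j) q) = Q" unfolding Q_def by (rule ball_iff) (rule pair_all(7)[symmetric])
  have f6: "(\<forall>j\<in>R. T6 (x1 j) (x2 j) q) = Q" unfolding Q_def by (rule ball_iff) (rule pair_all(8)[symmetric])
  have f8: "(\<forall>j\<in>R. T8 (x1 j) (x2 j) q) = Q" unfolding Q_def by (rule ball_iff) (rule pair_all(9)[symmetric])
  have f9: "(\<forall>j\<in>R. T9 (x1 j) (x2 j) q) = Q" unfolding Q_def by (rule ball_iff) (rule pair_all(10)[symmetric])
  have f7: "P7 = Q" unfolding e7 Q_def ..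
  show ?thesis
    unfolding e1 e2 e3 e3' e4 e4' e5 e5' e6 e8 e9 f2 f3 f3' f4 f4' f5 f5' f6 f8 f9 f7 by simp
qed


end
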